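(* Let $U$ be the transition matrix of a QRW on the non-negative integers with arbitrary non trivial coins, with associated orthogonality measure $\mu$, moments $\mu_n=\int_{\mathbb T}z^nd\mu$, and associated column vector of orthonormal Laurent polynomials $X=(1,X_1,X_2,\dots)^T$. Suppose that for some sequence of phases $e^{i\theta_n}$, $e^{-i\theta_n}U^n$ has a non null weak limit $U^\infty$ as $n\to\infty$. Then $\mu$ has a mass point $z_0\in\mathbb T$ such that $e^{i(\theta_{n+1}-\theta_n)}\to z_0$, and \[U^\infty=\mu_\infty X(z_0)X(z_0)^\dagger,\qquad \mu_\infty=\lim_{n\to\infty}e^{-i\theta_n}\mu_n .\] Furthermore $\lim_{n\to\infty}e^{-i\theta_n}z_0^n=\mu_\infty/\mu(\{z_0\})$, so that $\lim_{n\to\infty}z_0^{-n}\mu_n=\mu(\{z_0\})$ and $z_0^{-n}U^n$ converges weakly to \[\mu(\{z_0\})X(z_0)X(z_0)^\dagger=\frac{1}{\|X(z_0)\|^2}X(z_0)X(z_0)^\dagger,\] which is the orthogonal projection onto the eigenspace of $U$ associated with the eigenvalue $z_0$.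
   Context: Coins: for each $i\ge0$, $C_i=\begin{pmatrix}c^i_{11}&c^i_{12}\\ c^i_{21}&c^i_{22}\end{pmatrix}$ is a $2\times2$ unitary matrix with $c^i_{11}\ne0$ (non trivial). Number the pure states $|0\uparrow\rangle,|0\downarrow\rangle,|1\uparrow\rangle,|1\downarrow\rangle,\dots$ as $0,1,2,3,\dots$. The unitary transition matrix $U=(U_{j,k})_{j,k\ge0}$ ($U_{j,k}$ = amplitude of the one-step transition from state $j$ to state $k$) has as only non-zero entries: $U_{2i,2i+2}=c^i_{11}$, $U_{2i+1,2i+2}=c^i_{12}$ for $i\ge0$; $U_{2i,2i-1}=c^i_{21}$, $U_{2i+1,2i-1}=c^i_{22}$ for $i\ge1$; $U_{0,0}=c^0_{21}$, $U_{1,0}=c^0_{22}$. The orthogonality measure $\mu$ is the unique probability measure on the unit circle $\mathbb T$ with $\int_{\mathbb T}z^nd\mu=(U^n)_{0,0}$ for all $n\in\mathbb Z$. The orthonormal Laurent polynomials $X_j$ are the unique Laurent polynomials with $X_0=1$ and $\sum_l U_{j,l}X_l(z)=zX_j(z)$ for all $j\ge0$; $X(z)$ is the column vector $(X_0(z),X_1(z),\dots)^T$ and $X(z)^\dagger$ its conjugate transpose. A mass point of $\mu$ is a point $z_0$ with $\mu(\{z_0\})>0$. A sequence of uniformly bounded matrices converges weakly if it converges entrywise. *)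

theory Defs
  imports "HOL-Probability.Probability"
begin

type_synonym cmat = "nat \<Rightarrow> nat \<Rightarrow> complex"

text \<open>Coins: c i r s is the entry c^i_{rs}, r,s in {1,2}. Unitarity: C C^dagger = I.\<close>
definition unitary_coin :: "(nat \<Rightarrow> nat \<Rightarrow> complex) \<Rightarrow> bool" where
  "unitary_coin C \<longleftrightarrow>
     (\<forall>r\<in>{1,2}. \<forall>s\<in>{1,2}. (\<Sum>t\<in>{1,2::nat}. C r t * cnj (C s t)) = (if r = s then 1 else 0))"

text \<open>Transition matrix of the QRW on the non-negative integers; states numbered
  |i up> = 2i, |i down> = 2i+1.\<close>
definition qrw_U :: "(nat \<Rightarrow> nat \<Rightarrow> nat \<Rightarrow> complex) \<Rightarrow> cmat" where
  "qrw_U c j k =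
     (let i = j div 2 in
      if even j then
        (if k = j + 2 then c i 1 1
         else if i \<ge> 1 \<and> k = j - 1 then c i 2 1
         else if i = 0 \<and> k = 0 then c 0 2 1
         else 0)
      else
        (if k = j + 1 then c i 1 2
         else if i \<ge> 1 \<and> k = j - 2 then c i 2 2
         else if i = 0 \<and> k = 0 then c 0 2 2
         else 0))"

definition mat_mult :: "cmat \<Rightarrow> cmat \<Rightarrow> cmat" where
  "mat_mult A B j k = (\<Sum>\<^sub>\<infinity>l. A j l * B l k)"

definition mat_id :: cmat where
  "mat_id j k = (if j = k then 1 else 0)"

definition mat_adj :: "cmat \<Rightarrow> cmat" where
  "mat_adj A j k = cnj (A k j)"

primrec mat_pow :: "cmat \<Rightarrow> nat \<Rightarrow> cmat" where
  "mat_pow A 0 = mat_id"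
| "mat_pow A (Suc n) = mat_mult (mat_pow A n) A"

text \<open>Integer powers of the unitary matrix U (U^{-1} = U^dagger).\<close>
definition mat_ipow :: "cmat \<Rightarrow> int \<Rightarrow> cmat" where
  "mat_ipow A n = (if n \<ge> 0 then mat_pow A (nat n) else mat_pow (mat_adj A) (nat (- n)))"

definition in_l2 :: "(nat \<Rightarrow> complex) \<Rightarrow> bool" where
  "in_l2 v \<longleftrightarrow> summable (\<lambda>k. (cmod (v k))\<^sup>2)"

definition mat_apply :: "cmat \<Rightarrow> (nat \<Rightarrow> complex) \<Rightarrow> (nat \<Rightarrow> complex)" where
  "mat_apply A v j = (\<Sum>\<^sub>\<infinity>k. A j k * v k)"

definition eigenspace_l2 :: "cmat \<Rightarrow> complex \<Rightarrow> (nat \<Rightarrow> complex) set" where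
  "eigenspace_l2 A z = {v. in_l2 v \<and> mat_apply A v = (\<lambda>j. z * v j)}"

definition is_orth_proj_onto :: "cmat \<Rightarrow> (nat \<Rightarrow> complex) set \<Rightarrow> bool" where
  "is_orth_proj_onto P S \<longleftrightarrow>
     (\<forall>v. in_l2 v \<longrightarrow> mat_apply P v \<in> S \<and>
        (\<forall>w\<in>S. (\<Sum>\<^sub>\<infinity>j. (v j - mat_apply P v j) * cnj (w j)) = 0))"

end

theory Submission
  imports Defs
begin


definition prv :: "nat \<Rightarrow> nat" where "prv i = (if i = 0 then 0 else 2*i - 1)"

lemma U_row_even: "qrw_U c (2*i) l = (if l = 2*i+2 then c i 1 1 else 0) + (if l = prv i then c i 2 1 else 0)"
  unfolding qrw_U_def Let_def prv_def by auto

lemma U_row_odd: "qrw_U c (Suc (2*i)) l = (if l = 2*i+2 then c i 1 2 else 0) + (if l = prv i then c i 2 2 else 0)"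
  unfolding qrw_U_def Let_def prv_def by auto

lemma prv_inj: "prv i = prv i' \<longleftrightarrow> i = i'" unfolding prv_def by auto
lemma prv_ne: "prv i \<noteq> Suc (Suc (2*i'))" unfolding prv_def by presburger
lemma prv_le: "prv i \<le> 2*i" unfolding prv_def by auto
lemma prv_ge: "2*i \<le> prv i + 1" unfolding prv_def by auto

lemma nat_even_odd_cases: fixes j :: nat obtains i where "j = 2*i" | i where "j = 2*i+1"
  by (metis oddE evenE)

lemma U_col_even: "qrw_U c j (Suc (Suc (2*i))) = (if j = 2*i then c i 1 1 else 0) + (if j = 2*i+1 then c i 1 2 else 0)"
  by (cases j rule: nat_even_odd_cases) (auto simp: U_row_even U_row_odd prv_ne[symmetric])

lemma U_col_prv: "qrw_U c j (prv i) = (if j = 2*i then c i 2 1 else 0) + (if j = 2*i+1 then c i 2 2 else 0)"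
  by (cases j rule: nat_even_odd_cases) (auto simp: U_row_even U_row_odd prv_ne prv_inj)

lemma col_cases: obtains i where "k = 2*i+2" | i where "k = prv i"
proof (cases k rule: nat_even_odd_cases)
  case (1 i) then show ?thesis
  proof (cases i)
    case 0 then show ?thesis using that(2)[of 0] 1 by (simp add: prv_def)
  next
    case (Suc i') then show ?thesis using that(1)[of i'] 1 by simp
  qed
next
  case (2 i) then show ?thesis using that(2)[of "i+1"] by (auto simp: prv_def)
qed

lemma U_band_row: "qrw_U c j l = 0" if "j + 2 < l"
proof (cases j rule: nat_even_odd_cases)
  case (1 i) then show ?thesis using prv_le[of i] that by (simp add: U_row_even)
next
  case (2 i) then show ?thesis using prv_le[of i] that by (simp add: U_row_odd)
qed

lemma U_band_col: "k + 2 < j \<Longrightarrow> qrw_U c j k = 0"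
  by (cases j rule: nat_even_odd_cases) (auto simp: U_row_even U_row_odd prv_def)

lemma infsum_fin: fixes f :: "nat \<Rightarrow> 'a::{comm_monoid_add,t2_space}"
  assumes "\<And>l. N < l \<Longrightarrow> f l = 0" shows "infsum f UNIV = sum f {..N}"
proof -
  have "infsum f UNIV = infsum f {..N}"
    by (rule infsum_cong_neutral) (use assms in auto)
  then show ?thesis by simp
qed

lemma rowsum_even: assumes "2*i+2 \<le> N"
  shows "(\<Sum>l\<le>N. qrw_U c (2*i) l * v l) = c i 1 1 * v (2*i+2) + c i 2 1 * v (prv i)"
proof -
  have "prv i \<le> N" using prv_le[of i] assms by simp
  have e: "\<And>l. qrw_U c (2*i) l * v l = (if l = 2*i+2 then c i 1 1 * v (2*i+2) else 0) + (if l = prv i then c i 2 1 * v (prv i) else 0)"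
    by (simp add: U_row_even distrib_right)
  show ?thesis using assms \<open>prv i \<le> N\<close> by (simp only: e sum.distrib sum.delta) simp
qed

lemma rowsum_odd: assumes "2*i+2 \<le> N"
  shows "(\<Sum>l\<le>N. qrw_U c (2*i+1) l * v l) = c i 1 2 * v (2*i+2) + c i 2 2 * v (prv i)"
proof -
  have "prv i \<le> N" using prv_le[of i] assms by simp
  have e: "\<And>l. qrw_U c (2*i+1) l * v l = (if l = 2*i+2 then c i 1 2 * v (2*i+2) else 0) + (if l = prv i then c i 2 2 * v (prv i) else 0)"
    using U_row_odd[of c i] by (simp add: distrib_right)
  show ?thesis using assms \<open>prv i \<le> N\<close> by (simp only: e sum.distrib sum.delta) simp
qed

lemma colsum_even: assumes "2*i+1 \<le> N"
  shows "(\<Sum>j\<le>N. r j * qrw_U c j (2*i+2)) = r (2*i) * c i 1 1 + r (2*i+1) * c i 1 2"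
proof -
  have e: "\<And>j. r j * qrw_U c j (2*i+2) = (if j = 2*i then r (2*i) * c i 1 1 else 0) + (if j = 2*i+1 then r (2*i+1) * c i 1 2 else 0)"
    using U_col_even[of c _ i] by (simp add: distrib_left)
  show ?thesis using assms by (simp only: e sum.distrib sum.delta) simp
qed

lemma colsum_prv: assumes "2*i+1 \<le> N"
  shows "(\<Sum>j\<le>N. r j * qrw_U c j (prv i)) = r (2*i) * c i 2 1 + r (2*i+1) * c i 2 2"
proof -
  have e: "\<And>j. r j * qrw_U c j (prv i) = (if j = 2*i then r (2*i) * c i 2 1 else 0) + (if j = 2*i+1 then r (2*i+1) * c i 2 2 else 0)"
    using U_col_prv[of c _ i] by (simp add: distrib_left)
  show ?thesis using assms by (simp only: e sum.distrib sum.delta) simp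
qed

lemma infsum_row: "(\<Sum>\<^sub>\<infinity>l. qrw_U c j l * v l) = (\<Sum>l\<le>j+2. qrw_U c j l * v l)"
  by (rule infsum_fin) (simp add: U_band_row)

lemma matpow_Suc_R: "mat_pow (qrw_U c) (Suc n) j k = (\<Sum>l\<le>k+2. mat_pow (qrw_U c) n j l * qrw_U c l k)"
  unfolding mat_pow.simps mat_mult_def by (rule infsum_fin) (simp add: U_band_col)

lemma matpow_Suc_L: "mat_pow (qrw_U c) (Suc n) j k = (\<Sum>l\<le>j+2. qrw_U c j l * mat_pow (qrw_U c) n l k)"
proof (induction n arbitrary: j k)
  case 0
  have a: "(\<Sum>l\<le>k+2. mat_id j l * qrw_U c l k) = qrw_U c j k"
  proof -
    have e: "\<And>l. mat_id j l * qrw_U c l k = (if l = j then qrw_U c j k else 0)" by (simp add: mat_id_def)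
    show ?thesis by (simp only: e sum.delta) (auto intro!: U_band_col[symmetric] U_band_col)
  qed
  have b: "(\<Sum>l\<le>j+2. qrw_U c j l * mat_id l k) = qrw_U c j k"
  proof -
    have e: "\<And>l. qrw_U c j l * mat_id l k = (if l = k then qrw_U c j k else 0)" by (simp add: mat_id_def)
    show ?thesis by (simp only: e sum.delta) (auto intro!: U_band_row[symmetric] U_band_row)
  qed
  show ?case using a b by (simp only: matpow_Suc_R) simp
next
  case (Suc n)
  have "mat_pow (qrw_U c) (Suc (Suc n)) j k = (\<Sum>m\<le>k+2. mat_pow (qrw_U c) (Suc n) j m * qrw_U c m k)"
    by (rule matpow_Suc_R)
  also have "\<dots> = (\<Sum>m\<le>k+2. (\<Sum>l\<le>j+2. qrw_U c j l * mat_pow (qrw_U c) n l m) * qrw_U c m k)"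
    using Suc by simp
  also have "\<dots> = (\<Sum>l\<le>j+2. qrw_U c j l * (\<Sum>m\<le>k+2. mat_pow (qrw_U c) n l m * qrw_U c m k))"
    apply (simp only: sum_distrib_right)
    apply (subst sum.swap)
    apply (simp only: sum_distrib_left mult.assoc)
    done
  also have "\<dots> = (\<Sum>l\<le>j+2. qrw_U c j l * mat_pow (qrw_U c) (Suc n) l k)"
    by (simp only: matpow_Suc_R)
  finally show ?case .
qed




locale qrw =
  fixes c :: "nat \<Rightarrow> nat \<Rightarrow> nat \<Rightarrow> complex"
  assumes coins: "\<And>i. unitary_coin (c i)"
    and nontriv: "\<And>i. c i 1 1 \<noteq> 0"
begin

abbreviation U where "U \<equiv> qrw_U c"

lemma u_facts:
  "c i 1 1 * cnj (c i 1 1) + c i 1 2 * cnj (c i 1 2) = 1"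
  "c i 2 1 * cnj (c i 2 1) + c i 2 2 * cnj (c i 2 2) = 1"
  "c i 1 1 * cnj (c i 2 1) + c i 1 2 * cnj (c i 2 2) = 0"
  "c i 2 1 * cnj (c i 1 1) + c i 2 2 * cnj (c i 1 2) = 0"
  using coins[of i] unfolding unitary_coin_def by (auto simp: numeral_2_eq_2)

lemma c22_nz: "c i 2 2 \<noteq> 0"
proof
  assume h: "c i 2 2 = 0"
  then have "c i 2 1 \<noteq> 0" using u_facts(2)[of i] by auto
  moreover have "c i 1 1 * cnj (c i 2 1) = 0" using u_facts(3)[of i] h by simp
  ultimately show False using nontriv[of i] by simp
qed

definition reig :: "complex \<Rightarrow> (nat \<Rightarrow> complex) \<Rightarrow> bool" where
  "reig z v \<longleftrightarrow> (\<forall>i. c i 1 1 * v (2*i+2) + c i 2 1 * v (prv i) = z * v (2*i)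
                     \<and> c i 1 2 * v (2*i+2) + c i 2 2 * v (prv i) = z * v (2*i+1))"

definition leig :: "complex \<Rightarrow> (nat \<Rightarrow> complex) \<Rightarrow> bool" where
  "leig z r \<longleftrightarrow> (\<forall>i. r (2*i) * c i 1 1 + r (2*i+1) * c i 1 2 = z * r (2*i+2)
                     \<and> r (2*i) * c i 2 1 + r (2*i+1) * c i 2 2 = z * r (prv i))"

lemma reig_iff: "reig z v \<longleftrightarrow> (\<forall>j. (\<Sum>l\<le>j+2. U j l * v l) = z * v j)"
proof
  assume h: "reig z v"
  show "\<forall>j. (\<Sum>l\<le>j+2. U j l * v l) = z * v j"
  proof
    fix j show "(\<Sum>l\<le>j+2. U j l * v l) = z * v j"
    proof (cases j rule: nat_even_odd_cases)
      case (1 i) then show ?thesis using h rowsum_even[of i "2*i+2" c v] unfolding reig_def by simp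
    next
      case (2 i) then show ?thesis using h rowsum_odd[of i "2*i+1+2" c v] unfolding reig_def by simp
    qed
  qed
next
  assume h: "\<forall>j. (\<Sum>l\<le>j+2. U j l * v l) = z * v j"
  show "reig z v" unfolding reig_def
  proof
    fix i
    show "c i 1 1 * v (2*i+2) + c i 2 1 * v (prv i) = z * v (2*i) \<and> c i 1 2 * v (2*i+2) + c i 2 2 * v (prv i) = z * v (2*i+1)"
      using h[rule_format, of "2*i"] h[rule_format, of "2*i+1"] rowsum_even[of i "2*i+2" c v] rowsum_odd[of i "2*i+1+2" c v]
      by simp
  qed
qed

lemma leig_iff: "leig z r \<longleftrightarrow> (\<forall>k. (\<Sum>j\<le>k+2. r j * U j k) = z * r k)"
proof
  assume h: "leig z r"
  show "\<forall>k. (\<Sum>j\<le>k+2. r j * U j k) = z * r k"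
  proof
    fix k show "(\<Sum>j\<le>k+2. r j * U j k) = z * r k"
    proof (cases k rule: col_cases)
      case (1 i) then show ?thesis using h colsum_even[of i "2*i+2+2" r c] unfolding leig_def by simp
    next
      case (2 i) then show ?thesis using h colsum_prv[of i "prv i+2" r c] prv_ge[of i] unfolding leig_def by simp
    qed
  qed
next
  assume h: "\<forall>k. (\<Sum>j\<le>k+2. r j * U j k) = z * r k"
  show "leig z r" unfolding leig_def
  proof
    fix i
    show "r (2*i) * c i 1 1 + r (2*i+1) * c i 1 2 = z * r (2*i+2) \<and> r (2*i) * c i 2 1 + r (2*i+1) * c i 2 2 = z * r (prv i)"
      using h[rule_format, of "2*i+2"] h[rule_format, of "prv i"] colsum_even[of i "2*i+2+2" r c] colsum_prv[of i "prv i+2" r c] prv_ge[of i]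
      by simp
  qed
qed

lemma reig_zero: assumes "z \<noteq> 0" "reig z d" "d 0 = 0" shows "d j = 0"
proof -
  have "d (2*i) = 0 \<and> d (prv i) = 0" for i
  proof (induction i)
    case 0 then show ?case using assms by (simp add: prv_def)
  next
    case (Suc i)
    have e1: "c i 1 1 * d (2*i+2) + c i 2 1 * d (prv i) = z * d (2*i)"
      and e2: "c i 1 2 * d (2*i+2) + c i 2 2 * d (prv i) = z * d (2*i+1)"
      using assms(2) unfolding reig_def by blast+
    from e1 Suc have "c i 1 1 * d (2*i+2) = 0" by simp
    then have a: "d (2*i+2) = 0" using nontriv[of i] by simp
    from e2 Suc a have "z * d (2*i+1) = 0" by simp
    then have "d (2*i+1) = 0" using assms(1) by simp
    moreover have "prv (Suc i) = 2*i+1" by (simp add: prv_def)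
    ultimately show ?case using a by simp
  qed
  note h = this
  show ?thesis
  proof (cases j rule: nat_even_odd_cases)
    case (1 i) then show ?thesis using h[of i] by simp
  next
    case (2 i)
    have "prv (Suc i) = 2*i+1" by (simp add: prv_def)
    then show ?thesis using h[of "Suc i"] 2 by simp
  qed
qed

lemma leig_zero: assumes "z \<noteq> 0" "leig z d" "d 0 = 0" shows "d j = 0"
proof -
  have "d (2*i) = 0 \<and> d (2*i+1) = 0" for i
  proof (induction i)
    case 0
    have "d (2*0) * c 0 2 1 + d (2*0+1) * c 0 2 2 = z * d (prv 0)" using assms(2) unfolding leig_def by blast
    then have "d 1 * c 0 2 2 = 0" using assms(3) by (simp add: prv_def)
    then show ?case using assms(3) c22_nz[of 0] by simp
  next
    case (Suc i)
    have e1: "d (2*i) * c i 1 1 + d (2*i+1) * c i 1 2 = z * d (2*i+2)" using assms(2) unfolding leig_def by blast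
    then have "z * d (2*i+2) = 0" using Suc by simp
    then have a: "d (2*i+2) = 0" using assms(1) by simp
    have e2: "d (2*Suc i) * c (Suc i) 2 1 + d (2*Suc i+1) * c (Suc i) 2 2 = z * d (prv (Suc i))"
      using assms(2) unfolding leig_def by blast
    have "prv (Suc i) = 2*i+1" by (simp add: prv_def)
    with e2 a Suc have "d (2*Suc i+1) * c (Suc i) 2 2 = 0" by simp
    then have "d (2*Suc i+1) = 0" using c22_nz[of "Suc i"] by simp
    then show ?case using a by simp
  qed
  then show ?thesis by (cases j rule: nat_even_odd_cases) auto
qed

lemma reig_unique: assumes "z \<noteq> 0" "reig z v" "reig z x" "x 0 = 1" shows "v j = v 0 * x j"
proof -
  have "reig z (\<lambda>j. v j - v 0 * x j)" unfolding reig_def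
  proof
    fix i
    have ev: "c i 1 1 * v (2*i+2) + c i 2 1 * v (prv i) = z * v (2*i)"
        "c i 1 2 * v (2*i+2) + c i 2 2 * v (prv i) = z * v (2*i+1)"
      using assms(2) unfolding reig_def by blast+
    have ex: "c i 1 1 * x (2*i+2) + c i 2 1 * x (prv i) = z * x (2*i)"
        "c i 1 2 * x (2*i+2) + c i 2 2 * x (prv i) = z * x (2*i+1)"
      using assms(3) unfolding reig_def by blast+
    have "c i 1 1 * (v (2*i+2) - v 0 * x (2*i+2)) + c i 2 1 * (v (prv i) - v 0 * x (prv i))
        = (c i 1 1 * v (2*i+2) + c i 2 1 * v (prv i)) - v 0 * (c i 1 1 * x (2*i+2) + c i 2 1 * x (prv i))"
      by algebra
    also have "\<dots> = z * (v (2*i) - v 0 * x (2*i))" unfolding ev ex by algebra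
    finally have A: "c i 1 1 * (v (2*i+2) - v 0 * x (2*i+2)) + c i 2 1 * (v (prv i) - v 0 * x (prv i)) = z * (v (2*i) - v 0 * x (2*i))" .
    have "c i 1 2 * (v (2*i+2) - v 0 * x (2*i+2)) + c i 2 2 * (v (prv i) - v 0 * x (prv i))
        = (c i 1 2 * v (2*i+2) + c i 2 2 * v (prv i)) - v 0 * (c i 1 2 * x (2*i+2) + c i 2 2 * x (prv i))"
      by algebra
    also have "\<dots> = z * (v (2*i+1) - v 0 * x (2*i+1))" unfolding ev ex by algebra
    finally show "c i 1 1 * (v (2*i+2) - v 0 * x (2*i+2)) + c i 2 1 * (v (prv i) - v 0 * x (prv i)) = z * (v (2*i) - v 0 * x (2*i))
       \<and> c i 1 2 * (v (2*i+2) - v 0 * x (2*i+2)) + c i 2 2 * (v (prv i) - v 0 * x (prv i)) = z * (v (2*i+1) - v 0 * x (2*i+1))"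
      using A by simp
  qed
  then have "(\<lambda>j. v j - v 0 * x j) j = 0" by (rule reig_zero[OF assms(1)]) (simp add: assms(4))
  then show ?thesis by simp
qed

lemma leig_unique: assumes "z \<noteq> 0" "leig z v" "leig z x" "x 0 = 1" shows "v j = v 0 * x j"
proof -
  have "leig z (\<lambda>j. v j - v 0 * x j)" unfolding leig_def
  proof
    fix i
    have ev: "v (2*i) * c i 1 1 + v (2*i+1) * c i 1 2 = z * v (2*i+2)"
        "v (2*i) * c i 2 1 + v (2*i+1) * c i 2 2 = z * v (prv i)"
      using assms(2) unfolding leig_def by blast+
    have ex: "x (2*i) * c i 1 1 + x (2*i+1) * c i 1 2 = z * x (2*i+2)"
        "x (2*i) * c i 2 1 + x (2*i+1) * c i 2 2 = z * x (prv i)"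
      using assms(3) unfolding leig_def by blast+
    have "(v (2*i) - v 0 * x (2*i)) * c i 1 1 + (v (2*i+1) - v 0 * x (2*i+1)) * c i 1 2
        = (v (2*i) * c i 1 1 + v (2*i+1) * c i 1 2) - v 0 * (x (2*i) * c i 1 1 + x (2*i+1) * c i 1 2)"
      by algebra
    also have "\<dots> = z * (v (2*i+2) - v 0 * x (2*i+2))" unfolding ev ex by algebra
    finally have A: "(v (2*i) - v 0 * x (2*i)) * c i 1 1 + (v (2*i+1) - v 0 * x (2*i+1)) * c i 1 2 = z * (v (2*i+2) - v 0 * x (2*i+2))" .
    have "(v (2*i) - v 0 * x (2*i)) * c i 2 1 + (v (2*i+1) - v 0 * x (2*i+1)) * c i 2 2
        = (v (2*i) * c i 2 1 + v (2*i+1) * c i 2 2) - v 0 * (x (2*i) * c i 2 1 + x (2*i+1) * c i 2 2)"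
      by algebra
    also have "\<dots> = z * (v (prv i) - v 0 * x (prv i))" unfolding ev ex by algebra
    finally show "(v (2*i) - v 0 * x (2*i)) * c i 1 1 + (v (2*i+1) - v 0 * x (2*i+1)) * c i 1 2 = z * (v (2*i+2) - v 0 * x (2*i+2))
       \<and> (v (2*i) - v 0 * x (2*i)) * c i 2 1 + (v (2*i+1) - v 0 * x (2*i+1)) * c i 2 2 = z * (v (prv i) - v 0 * x (prv i))"
      using A by simp
  qed
  then have "(\<lambda>j. v j - v 0 * x j) j = 0" by (rule leig_zero[OF assms(1)]) (simp add: assms(4))
  then show ?thesis by simp
qed

lemma conj_eq_aux:
  fixes a b cc d q1 q2 p1 p2 z :: complex
  assumes e1: "a * q1 + cc * q2 = z * p1" and e2: "b * q1 + d * q2 = z * p2"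
    and n1: "a * cnj a + b * cnj b = 1" and o1: "cc * cnj a + d * cnj b = 0"
    and z: "z * cnj z = 1"
  shows "cnj p1 * a + cnj p2 * b = z * cnj q1"
proof -
  have "z * (p1 * cnj a + p2 * cnj b) = (a * q1 + cc * q2) * cnj a + (b * q1 + d * q2) * cnj b"
    by (simp add: e1 e2 algebra_simps)
  also have "\<dots> = q1 * (a * cnj a + b * cnj b) + q2 * (cc * cnj a + d * cnj b)" by algebra
  finally have "z * (p1 * cnj a + p2 * cnj b) = q1" using n1 o1 by simp
  then have "cnj z * (cnj p1 * a + cnj p2 * b) = cnj q1"
    by (metis complex_cnj_add complex_cnj_cnj complex_cnj_mult)
  then have "z * cnj z * (cnj p1 * a + cnj p2 * b) = z * cnj q1" by (metis mult.assoc)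
  then show ?thesis using z by simp
qed

lemma reig_cnj_leig: assumes "cmod z = 1" "reig z x" shows "leig z (\<lambda>j. cnj (x j))"
proof -
  have z: "z * cnj z = 1" using complex_norm_square[of z] assms(1) by simp
  show ?thesis unfolding leig_def
  proof
    fix i
    have e1: "c i 1 1 * x (2*i+2) + c i 2 1 * x (prv i) = z * x (2*i)"
      and e2: "c i 1 2 * x (2*i+2) + c i 2 2 * x (prv i) = z * x (2*i+1)"
      using assms(2) unfolding reig_def by auto
    have A: "cnj (x (2*i)) * c i 1 1 + cnj (x (2*i+1)) * c i 1 2 = z * cnj (x (2*i+2))"
      by (rule conj_eq_aux[OF e1 e2 u_facts(1) u_facts(4) z])
    have e1': "c i 2 1 * x (prv i) + c i 1 1 * x (2*i+2) = z * x (2*i)" using e1 by (simp add: add.commute)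
    have e2': "c i 2 2 * x (prv i) + c i 1 2 * x (2*i+2) = z * x (2*i+1)" using e2 by (simp add: add.commute)
    have B: "cnj (x (2*i)) * c i 2 1 + cnj (x (2*i+1)) * c i 2 2 = z * cnj (x (prv i))"
      by (rule conj_eq_aux[OF e1' e2' u_facts(2) u_facts(3) z])
    show "cnj (x (2*i)) * c i 1 1 + cnj (x (2*i+1)) * c i 1 2 = z * cnj (x (2*i+2)) \<and>
          cnj (x (2*i)) * c i 2 1 + cnj (x (2*i+1)) * c i 2 2 = z * cnj (x (prv i))" using A B by simp
  qed
qed

end



lemma sum_trunc: fixes g :: "nat \<Rightarrow> 'a::comm_monoid_add"
  assumes "\<And>l. L < l \<Longrightarrow> g l = 0" "L \<le> N" shows "sum g {..N} = sum g {..L}"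
  by (rule sum.mono_neutral_right) (use assms in auto)

lemma sum_pairs: fixes f :: "nat \<Rightarrow> 'a::comm_monoid_add" and N :: nat
  shows "(\<Sum>j<2*N. f j) = (\<Sum>i<N. f (2*i) + f (2*i+1))"
  by (induction N) (auto simp: sum.distrib ac_simps)

lemma sum_prv: fixes g :: "nat \<Rightarrow> real" assumes "N \<ge> 1"
  shows "(\<Sum>i<N. g (2*i+2) + g (prv i)) + g (2*N-1) = (\<Sum>l\<le>2*N. g l)"
  using assms
proof (induction N rule: nat_induct_at_least)
  case base
  have "{..2::nat} = {0,1,2}" by auto
  then show ?case by (simp add: prv_def eval_nat_numeral)
next
  case (Suc N)
  have p: "prv N = 2*N-1" using Suc by (simp add: prv_def)
  have "(\<Sum>l\<le>2*Suc N. g l) = (\<Sum>l\<le>2*N. g l) + g (2*N+1) + g (2*N+2)"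
    by (simp add: add.assoc)
  then show ?case using Suc.IH p by simp
qed

context qrw
begin

lemma matpow_band_col: "k + 2*n < j \<Longrightarrow> mat_pow U n j k = 0"
proof (induction n arbitrary: j k)
  case 0 then show ?case by (simp add: mat_id_def)
next
  case (Suc n)
  have "mat_pow U (Suc n) j k = (\<Sum>l\<le>j+2. U j l * mat_pow U n l k)" by (rule matpow_Suc_L)
  also have "\<dots> = 0"
  proof (rule sum.neutral, rule ballI)
    fix l assume "l \<in> {..j+2}"
    show "U j l * mat_pow U n l k = 0"
    proof (cases "l + 2 < j")
      case True then show ?thesis by (simp add: U_band_col)
    next
      case False then have "k + 2*n < l" using Suc.prems by simp
      then show ?thesis using Suc.IH by simp
    qed
  qed
  finally show ?case .
qed

lemma matpow_band_row: "j + 2*n < k \<Longrightarrow> mat_pow U n j k = 0"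
proof (induction n arbitrary: j k)
  case 0 then show ?case by (simp add: mat_id_def)
next
  case (Suc n)
  have "mat_pow U (Suc n) j k = (\<Sum>l\<le>j+2. U j l * mat_pow U n l k)" by (rule matpow_Suc_L)
  also have "\<dots> = 0"
  proof (rule sum.neutral, rule ballI)
    fix l assume "l \<in> {..j+2}"
    then have "l + 2*n < k" using Suc.prems by simp
    then show "U j l * mat_pow U n l k = 0" using Suc.IH by simp
  qed
  finally show ?case .
qed

lemma leig_pow: assumes "leig z r" "k + 2*n \<le> N"
  shows "(\<Sum>j\<le>N. r j * mat_pow U n j k) = z^n * r k"
  using assms(2)
proof (induction n arbitrary: k N)
  case 0
  have e: "\<And>j. r j * mat_id j k = (if j = k then r k else 0)" by (simp add: mat_id_def)
  show ?case using 0 by (simp only: e sum.delta mat_pow.simps) simp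
next
  case (Suc n)
  have "(\<Sum>j\<le>N. r j * mat_pow U (Suc n) j k) = (\<Sum>j\<le>N. r j * (\<Sum>l\<le>k+2. mat_pow U n j l * U l k))"
    by (simp only: matpow_Suc_R)
  also have "\<dots> = (\<Sum>l\<le>k+2. (\<Sum>j\<le>N. r j * mat_pow U n j l) * U l k)"
    apply (simp only: sum_distrib_left sum_distrib_right)
    apply (subst sum.swap)
    apply (simp only: mult.assoc)
    done
  also have "\<dots> = (\<Sum>l\<le>k+2. z^n * r l * U l k)"
    by (rule sum.cong) (use Suc in auto)
  also have "\<dots> = z^n * (\<Sum>l\<le>k+2. r l * U l k)"
    by (simp only: sum_distrib_left mult.assoc)
  also have "\<dots> = z^Suc n * r k" using assms(1) unfolding leig_iff by simp
  finally show ?case .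
qed

lemma block_norm:
  "(cmod (c i 1 1 * a + c i 2 1 * b))\<^sup>2 + (cmod (c i 1 2 * a + c i 2 2 * b))\<^sup>2 = (cmod a)\<^sup>2 + (cmod b)\<^sup>2"
proof -
  define x where "x = c i 1 1 * a + c i 2 1 * b"
  define y where "y = c i 1 2 * a + c i 2 2 * b"
  have "x * cnj x + y * cnj y = (c i 1 1 * cnj (c i 1 1) + c i 1 2 * cnj (c i 1 2)) * (a * cnj a)
     + (c i 2 1 * cnj (c i 2 1) + c i 2 2 * cnj (c i 2 2)) * (b * cnj b)
     + (c i 1 1 * cnj (c i 2 1) + c i 1 2 * cnj (c i 2 2)) * (a * cnj b)
     + (c i 2 1 * cnj (c i 1 1) + c i 2 2 * cnj (c i 1 2)) * (b * cnj a)"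
    unfolding x_def y_def complex_cnj_add complex_cnj_mult by algebra
  also have "\<dots> = a * cnj a + b * cnj b" by (simp only: u_facts) simp
  finally have "x * cnj x + y * cnj y = a * cnj a + b * cnj b" .
  then have "complex_of_real ((cmod x)\<^sup>2 + (cmod y)\<^sup>2) = complex_of_real ((cmod a)\<^sup>2 + (cmod b)\<^sup>2)"
    by (simp only: of_real_add complex_norm_square)
  then show ?thesis unfolding x_def y_def by (simp only: of_real_eq_iff)
qed

lemma col_norm: "2*n \<le> N \<Longrightarrow> (\<Sum>j\<le>N. (cmod (mat_pow U n j 0))\<^sup>2) = 1"
proof (induction n arbitrary: N)
  case 0
  have e: "\<And>j. (cmod (mat_id j 0))\<^sup>2 = (if j = 0 then 1 else 0)" by (simp add: mat_id_def)
  show ?case by (simp only: e sum.delta mat_pow.simps) simp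
next
  case (Suc n)
  define v where "v l = mat_pow U n l 0" for l
  define w where "w j = mat_pow U (Suc n) j 0" for j
  define M where "M = n + 2"
  have we: "w (2*i) = c i 1 1 * v (2*i+2) + c i 2 1 * v (prv i)" for i
    unfolding w_def v_def by (simp only: matpow_Suc_L rowsum_even[OF order_refl])
  have wo: "w (2*i+1) = c i 1 2 * v (2*i+2) + c i 2 2 * v (prv i)" for i
  proof -
    have "w (2*i+1) = (\<Sum>l\<le>2*i+1+2. U (2*i+1) l * v l)" unfolding w_def v_def by (simp only: matpow_Suc_L)
    also have "\<dots> = c i 1 2 * v (2*i+2) + c i 2 2 * v (prv i)" using rowsum_odd[of i "2*i+1+2" c v] by simp
    finally show ?thesis .
  qed
  have wz: "2*n+2 < j \<Longrightarrow> w j = 0" for j unfolding w_def by (rule matpow_band_col) simp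
  have vz: "2*n < l \<Longrightarrow> v l = 0" for l unfolding v_def by (rule matpow_band_col) simp
  have "(\<Sum>j\<le>N. (cmod (w j))\<^sup>2) = (\<Sum>j\<le>2*n+2. (cmod (w j))\<^sup>2)"
    by (rule sum_trunc) (use wz Suc.prems in auto)
  also have "\<dots> = (\<Sum>j\<le>2*M-1. (cmod (w j))\<^sup>2)"
    by (rule sum_trunc[symmetric]) (use wz M_def in auto)
  also have "{..2*M-1} = {..<2*M}" unfolding M_def by auto
  also have "(\<Sum>j<2*M. (cmod (w j))\<^sup>2) = (\<Sum>i<M. (cmod (w (2*i)))\<^sup>2 + (cmod (w (2*i+1)))\<^sup>2)"
    by (rule sum_pairs)
  also have "\<dots> = (\<Sum>i<M. (cmod (v (2*i+2)))\<^sup>2 + (cmod (v (prv i)))\<^sup>2)"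
    by (rule sum.cong) (simp_all only: we wo block_norm)
  also have "\<dots> = (\<Sum>l\<le>2*M. (cmod (v l))\<^sup>2) - (cmod (v (2*M-1)))\<^sup>2"
    using sum_prv[of M "\<lambda>l. (cmod (v l))\<^sup>2"] M_def by simp
  also have "v (2*M-1) = 0" using vz M_def by simp
  also have "(\<Sum>l\<le>2*M. (cmod (v l))\<^sup>2) = 1" unfolding v_def by (rule Suc.IH) (simp add: M_def)
  finally show ?case unfolding w_def by simp
qed

end



locale qrwm = qrw c for c :: "nat \<Rightarrow> nat \<Rightarrow> nat \<Rightarrow> complex" +
  fixes M :: "complex measure"
    and X :: "nat \<Rightarrow> complex \<Rightarrow> complex"
    and \<theta> :: "nat \<Rightarrow> real"
    and Uinf :: cmat
  assumes prob: "prob_space M"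
    and sets_M: "sets M = sets borel"
    and on_T: "emeasure M (sphere 0 1) = 1"
    and moments: "\<And>n::int. integral\<^sup>L M (\<lambda>z. z powi n) = mat_ipow (qrw_U c) n 0 0"
    and X0: "\<And>z. X 0 z = 1"
    and Xeig: "\<And>j z. z \<noteq> 0 \<Longrightarrow> (\<Sum>\<^sub>\<infinity>l. qrw_U c j l * X l z) = z * X j z"
    and lim: "\<And>j k. (\<lambda>n. exp (- \<i> * of_real (\<theta> n)) * mat_pow (qrw_U c) n j k) \<longlonglongrightarrow> Uinf j k"
    and nonnull: "Uinf \<noteq> (\<lambda>j k. 0)"
begin

definition ph :: "nat \<Rightarrow> complex" where "ph n = exp (- \<i> * of_real (\<theta> n))"
definition bb :: "nat \<Rightarrow> complex" where "bb n = exp (\<i> * of_real (\<theta> (Suc n) - \<theta> n))"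

lemma bb_ph: "bb n * ph (Suc n) = ph n"
  unfolding bb_def ph_def by (simp add: exp_add[symmetric] algebra_simps)

lemma norm_ph: "cmod (ph n) = 1" unfolding ph_def by (simp add: norm_exp_i_times[of "- \<theta> n", simplified])
lemma norm_bb: "cmod (bb n) = 1" unfolding bb_def
  by (metis norm_exp_i_times of_real_diff)

lemma ph_nz: "ph n \<noteq> 0" using norm_ph[of n] by auto

lemma reigX: "z \<noteq> 0 \<Longrightarrow> reig z (\<lambda>j. X j z)"
  unfolding reig_iff using Xeig by (simp add: infsum_row)

definition UU :: "nat \<Rightarrow> nat \<Rightarrow> complex" where "UU j k = (\<Sum>l\<le>k+2. Uinf j l * U l k)"
definition UU' :: "nat \<Rightarrow> nat \<Rightarrow> complex" where "UU' j k = (\<Sum>l\<le>j+2. U j l * Uinf l k)"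

lemma lim': "(\<lambda>n. ph n * mat_pow U n j k) \<longlonglongrightarrow> Uinf j k" using lim unfolding ph_def .

lemma limUU: "(\<lambda>n. ph n * mat_pow U (Suc n) j k) \<longlonglongrightarrow> UU j k"
proof -
  have "(\<lambda>n. \<Sum>l\<le>k+2. (ph n * mat_pow U n j l) * U l k) \<longlonglongrightarrow> UU j k"
    unfolding UU_def by (intro tendsto_intros lim')
  moreover have "(\<Sum>l\<le>k+2. (ph n * mat_pow U n j l) * U l k) = ph n * mat_pow U (Suc n) j k" for n
    by (simp only: matpow_Suc_R sum_distrib_left mult.assoc)
  ultimately show ?thesis by simp
qed

lemma limUU': "(\<lambda>n. ph n * mat_pow U (Suc n) j k) \<longlonglongrightarrow> UU' j k"
proof -
  have "(\<lambda>n. \<Sum>l\<le>j+2. U j l * (ph n * mat_pow U n l k)) \<longlonglongrightarrow> UU' j k"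
    unfolding UU'_def by (intro tendsto_intros lim')
  moreover have "(\<Sum>l\<le>j+2. U j l * (ph n * mat_pow U n l k)) = ph n * mat_pow U (Suc n) j k" for n
    by (subst matpow_Suc_L) (simp only: sum_distrib_left mult.left_commute)
  ultimately show ?thesis by simp
qed

lemma limSuc: "(\<lambda>n. ph (Suc n) * mat_pow U (Suc n) j k) \<longlonglongrightarrow> Uinf j k"
  using LIMSEQ_Suc[OF lim'] .

lemma split_Suc: "ph n * mat_pow U (Suc n) j k = bb n * (ph (Suc n) * mat_pow U (Suc n) j k)"
  using bb_ph[of n] by (simp add: mult.assoc)

definition z0 :: complex where
  "z0 = (let jk = SOME jk. Uinf (fst jk) (snd jk) \<noteq> 0 in UU (fst jk) (snd jk) / Uinf (fst jk) (snd jk))"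

lemma bb_lim: "bb \<longlonglongrightarrow> z0"
proof -
  have "\<exists>j k. Uinf j k \<noteq> 0" using nonnull by (auto simp: fun_eq_iff)
  then obtain j k where jk: "Uinf j k \<noteq> 0" by blast
  define jk where "jk = (SOME jk. Uinf (fst jk) (snd jk) \<noteq> 0)"
  have jk0: "Uinf (fst jk) (snd jk) \<noteq> 0" unfolding jk_def by (rule someI[of _ "(j,k)"]) (simp add: jk)
  define j' k' where "j' = fst jk" and "k' = snd jk"
  have nz: "Uinf j' k' \<noteq> 0" using jk0 j'_def k'_def by simp
  have z0e: "z0 = UU j' k' / Uinf j' k'" unfolding z0_def Let_def jk_def[symmetric] j'_def k'_def ..
  have q: "(\<lambda>n. (ph n * mat_pow U (Suc n) j' k') / (ph (Suc n) * mat_pow U (Suc n) j' k')) \<longlonglongrightarrow> z0"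
    unfolding z0e by (intro tendsto_divide limUU limSuc nz)
  have ev: "eventually (\<lambda>n. ph (Suc n) * mat_pow U (Suc n) j' k' \<noteq> 0) sequentially"
    using limSuc[of j' k'] nz by (rule tendsto_imp_eventually_ne)
  have "eventually (\<lambda>n. (ph n * mat_pow U (Suc n) j' k') / (ph (Suc n) * mat_pow U (Suc n) j' k') = bb n) sequentially"
    using ev
  proof eventually_elim
    case (elim n) show ?case unfolding split_Suc[of n j' k'] using elim by (rule nonzero_mult_div_cancel_right)
  qed
  from Lim_transform_eventually[OF q this] show ?thesis .
qed

lemma norm_z0: "cmod z0 = 1"
proof -
  have "(\<lambda>n. cmod (bb n)) \<longlonglongrightarrow> cmod z0" by (intro tendsto_intros bb_lim)
  then have "(\<lambda>n. 1::real) \<longlonglongrightarrow> cmod z0" by (simp add: norm_bb)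
  then show ?thesis using LIMSEQ_const_iff by metis
qed

lemma z0_nz: "z0 \<noteq> 0" using norm_z0 by auto

lemma UU_eq: "UU j k = z0 * Uinf j k"
proof -
  have "(\<lambda>n. bb n * (ph (Suc n) * mat_pow U (Suc n) j k)) \<longlonglongrightarrow> z0 * Uinf j k"
    by (intro tendsto_intros bb_lim limSuc)
  then have "(\<lambda>n. ph n * mat_pow U (Suc n) j k) \<longlonglongrightarrow> z0 * Uinf j k" by (simp only: split_Suc)
  then show ?thesis using limUU LIMSEQ_unique by blast
qed

lemma UU'_eq: "UU' j k = z0 * Uinf j k"
proof -
  have "(\<lambda>n. bb n * (ph (Suc n) * mat_pow U (Suc n) j k)) \<longlonglongrightarrow> z0 * Uinf j k"
    by (intro tendsto_intros bb_lim limSuc)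
  then have "(\<lambda>n. ph n * mat_pow U (Suc n) j k) \<longlonglongrightarrow> z0 * Uinf j k" by (simp only: split_Suc)
  then show ?thesis using limUU' LIMSEQ_unique by blast
qed

definition muinf where "muinf = Uinf 0 0"

lemma Uinf_form: "Uinf j k = muinf * X j z0 * cnj (X k z0)"
proof -
  have rc: "reig z0 (\<lambda>j. Uinf j k)" for k
    unfolding reig_iff using UU'_eq unfolding UU'_def by simp
  have col: "Uinf j k = Uinf 0 k * X j z0" for j k
    using reig_unique[OF z0_nz rc reigX[OF z0_nz], where j=j] X0 by simp
  have lr: "leig z0 (\<lambda>k. Uinf 0 k)"
    unfolding leig_iff using UU_eq unfolding UU_def by simp
  have lx: "leig z0 (\<lambda>k. cnj (X k z0))" by (rule reig_cnj_leig[OF norm_z0 reigX[OF z0_nz]])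
  have row: "Uinf 0 k = Uinf 0 0 * cnj (X k z0)" for k
    using leig_unique[OF z0_nz lr lx, where j=k] X0 by simp
  show ?thesis using col[of j k] row[of k] unfolding muinf_def by simp
qed

lemma muinf_nz: "muinf \<noteq> 0"
proof
  assume "muinf = 0"
  have "\<forall>j k. Uinf j k = 0"
  proof (intro allI)
    fix j k show "Uinf j k = 0" using Uinf_form[of j k] \<open>muinf = 0\<close> by (simp only: mult_zero_left)
  qed
  then show False using nonnull by (auto simp: fun_eq_iff)
qed

end



context qrwm
begin

lemma space_M: "space M = UNIV"
  using sets_eq_imp_space_eq[OF sets_M] by simp

lemma bm_M: "borel_measurable M = borel_measurable borel"
  by (rule measurable_cong_sets[OF sets_M refl])

lemma AE_T: "AE z in M. cmod z = 1"
proof -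
  interpret prob_space M by (rule prob)
  have s: "sphere (0::complex) 1 \<in> sets M" unfolding sets_M by simp
  have "measure M (sphere 0 1) = 1" using on_T by (simp add: measure_def)
  then have "AE z in M. z \<in> sphere 0 1" using AE_in_set_eq_1[OF s] by simp
  then show ?thesis by (rule AE_mp) (simp add: AE_I2)
qed

lemma intg: fixes f :: "complex \<Rightarrow> complex"
  assumes "f \<in> borel_measurable borel" "AE z in M. cmod (f z) \<le> B" shows "integrable M f"
proof -
  interpret prob_space M by (rule prob)
  have "f \<in> borel_measurable M" by (subst bm_M) (rule assms(1))
  then show ?thesis using assms(2) by (intro integrable_const_bound) auto
qed

lemma intg_pow: "integrable M (\<lambda>z. z ^ n)"
proof (rule intg[where B=1])
  show "(\<lambda>z::complex. z ^ n) \<in> borel_measurable borel" by (rule borel_measurable_continuous_onI, rule continuous_on_power[OF continuous_on_id])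
  show "AE z in M. cmod (z ^ n) \<le> 1" using AE_T by (rule AE_mp) (simp add: AE_I2 norm_power)
qed

definition mus :: "nat \<Rightarrow> complex" where "mus n = integral\<^sup>L M (\<lambda>z. z ^ n)"

lemma mus_eq: "mus n = mat_pow U n 0 0"
  using moments[of "int n"] unfolding mus_def mat_ipow_def by simp

lemma mus_lim: "(\<lambda>n. ph n * mus (n + m)) \<longlonglongrightarrow> z0 ^ m * muinf"
proof (induction m)
  case 0 then show ?case using lim'[of 0 0] by (simp add: mus_eq muinf_def)
next
  case (Suc m)
  have A: "(\<lambda>n. ph (Suc n) * mus (Suc n + m)) \<longlonglongrightarrow> z0 ^ m * muinf" using LIMSEQ_Suc[OF Suc.IH] .
  have B: "(\<lambda>n. bb n * (ph (Suc n) * mus (Suc n + m))) \<longlonglongrightarrow> z0 * (z0 ^ m * muinf)"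
    by (rule tendsto_mult[OF bb_lim A])
  have eq: "ph n * mus (n + Suc m) = bb n * (ph (Suc n) * mus (Suc n + m))" for n
    using bb_ph[of n] by (simp add: mult.assoc[symmetric])
  show ?case unfolding eq using B by (simp add: mult.assoc)
qed

definition pp :: "nat \<Rightarrow> complex \<Rightarrow> complex" where "pp N z = ((1 + z * cnj z0) / 2) ^ N"
definition aa :: "nat \<Rightarrow> nat \<Rightarrow> complex" where "aa N k = of_nat (N choose k) * cnj z0 ^ k / 2 ^ N"

lemma pp_expand: "pp N z = (\<Sum>k\<le>N. aa N k * z ^ k)"
proof -
  have "pp N z = (z * cnj z0 + 1) ^ N / 2 ^ N" unfolding pp_def by (simp add: power_divide add.commute)
  also have "\<dots> = (\<Sum>k\<le>N. of_nat (N choose k) * (z * cnj z0) ^ k * 1 ^ (N - k)) / 2 ^ N"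
    by (simp only: binomial_ring)
  also have "\<dots> = (\<Sum>k\<le>N. aa N k * z ^ k)"
    unfolding aa_def by (simp add: sum_divide_distrib power_mult_distrib algebra_simps)
  finally show ?thesis .
qed

lemma z0_cnj: "z0 * cnj z0 = 1"
  using complex_norm_square[of z0] norm_z0 by simp

lemma pp_z0: "pp N z0 = 1" unfolding pp_def using z0_cnj by simp

lemma int_pp: "ph n * integral\<^sup>L M (\<lambda>z. z ^ n * pp N z) = (\<Sum>k\<le>N. aa N k * (ph n * mus (n + k)))"
proof -
  have e: "(\<lambda>z. z ^ n * pp N z) = (\<lambda>z. \<Sum>k\<le>N. aa N k * z ^ (n + k))"
    by (rule ext) (simp add: pp_expand sum_distrib_left power_add algebra_simps)
  have "integral\<^sup>L M (\<lambda>z. z ^ n * pp N z) = (\<Sum>k\<le>N. aa N k * mus (n + k))"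
  proof -
    have "integral\<^sup>L M (\<lambda>z. \<Sum>k\<le>N. aa N k * z ^ (n + k)) = (\<Sum>k\<le>N. integral\<^sup>L M (\<lambda>z. aa N k * z ^ (n + k)))"
      by (rule Bochner_Integration.integral_sum[where f="\<lambda>k z. aa N k * z ^ (n + k)"]) (simp add: intg_pow)
    then show ?thesis unfolding e mus_def by simp
  qed
  then show ?thesis by (simp add: sum_distrib_left algebra_simps)
qed

lemma int_pp_lim: "(\<lambda>n. ph n * integral\<^sup>L M (\<lambda>z. z ^ n * pp N z)) \<longlonglongrightarrow> muinf"
proof -
  have "(\<lambda>n. \<Sum>k\<le>N. aa N k * (ph n * mus (n + k))) \<longlonglongrightarrow> (\<Sum>k\<le>N. aa N k * (z0 ^ k * muinf))"
    by (intro tendsto_intros mus_lim)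
  also have "(\<Sum>k\<le>N. aa N k * (z0 ^ k * muinf)) = muinf * pp N z0"
    by (simp add: pp_expand sum_distrib_left algebra_simps)
  finally show ?thesis by (simp add: int_pp pp_z0)
qed


definition ind :: "complex \<Rightarrow> complex" where "ind z = indicator {z0} z"
definition mu0 :: real where "mu0 = measure M {z0}"

lemma sets_z0: "{z0} \<in> sets M" unfolding sets_M by simp

lemma ind_meas: "ind \<in> borel_measurable borel"
  unfolding ind_def by (rule borel_measurable_indicator) simp

lemma pp_meas: "pp N \<in> borel_measurable borel"
  unfolding pp_def by (rule borel_measurable_continuous_onI) (auto intro!: continuous_intros)

lemma int_ind: "integral\<^sup>L M (\<lambda>z. z ^ n * ind z) = z0 ^ n * of_real mu0"
proof -
  interpret prob_space M by (rule prob)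
  have e: "(\<lambda>z. z ^ n * ind z) = (\<lambda>z. indicator {z0} z *\<^sub>R z0 ^ n)"
    by (rule ext) (simp add: ind_def indicator_def)
  have "integrable M (indicator {z0} :: complex \<Rightarrow> real)"
    using sets_z0 by (intro integrable_real_indicator) (auto simp: emeasure_eq_measure)
  then have "integral\<^sup>L M (\<lambda>z. indicator {z0} z *\<^sub>R z0 ^ n) = measure M {z0} *\<^sub>R z0 ^ n"
    by (simp add: space_M)
  then show ?thesis unfolding e mu0_def by (simp add: scaleR_conv_of_real)
qed

lemma norm_half: assumes "cmod z = 1" shows "cmod ((1 + z * cnj z0) / 2) \<le> 1"
proof -
  have "cmod (1 + z * cnj z0) \<le> 1 + cmod (z * cnj z0)" using norm_triangle_ineq[of 1 "z * cnj z0"] by simp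
  also have "cmod (z * cnj z0) = 1" using assms norm_z0 by (simp add: norm_mult)
  finally show ?thesis by (simp add: norm_divide)
qed

lemma norm_half_lt: assumes "cmod z = 1" "z \<noteq> z0" shows "cmod ((1 + z * cnj z0) / 2) < 1"
proof -
  define w where "w = z * cnj z0"
  have w1: "cmod w = 1" using assms norm_z0 unfolding w_def by (simp add: norm_mult)
  have wne: "w \<noteq> 1"
  proof
    assume "w = 1"
    then have "z * (cnj z0 * z0) = z0" unfolding w_def by (metis mult.assoc mult_1)
    then show False using z0_cnj assms(2) by (simp add: mult.commute)
  qed
  have r: "(Re w)\<^sup>2 + (Im w)\<^sup>2 = 1" using w1 cmod_power2[of w] by simp
  have "cmod (1 + w) < 2"
  proof (rule ccontr)
    assume "\<not> cmod (1 + w) < 2"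
    then have "(cmod (1 + w))\<^sup>2 \<ge> 2\<^sup>2" by (intro power_mono) auto
    then have "(1 + Re w)\<^sup>2 + (Im w)\<^sup>2 \<ge> 4" using cmod_power2[of "1 + w"] by simp
    then have "Re w \<ge> 1" using r by (simp add: power2_eq_square algebra_simps)
    moreover have "(Re w)\<^sup>2 \<le> 1" using r by (metis le_add_same_cancel1 zero_le_power2)
    then have "Re w \<le> 1" by (simp add: abs_square_le_1)
    ultimately have "Re w = 1" by simp
    then have "Im w = 0" using r by simp
    then have "w = 1" using \<open>Re w = 1\<close> by (simp add: complex_eq_iff)
    then show False using wne by simp
  qed
  then show ?thesis unfolding w_def by (simp add: norm_divide)
qed

definition eps :: "nat \<Rightarrow> real" where "eps N = integral\<^sup>L M (\<lambda>z. cmod (pp N z - ind z))"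

lemma pp_le: assumes "cmod z = 1" shows "cmod (pp N z) \<le> 1"
proof -
  have h: "cmod ((1 + z * cnj z0) / 2) \<le> 1" by (rule norm_half[OF assms])
  show ?thesis unfolding pp_def norm_power by (rule power_le_one[OF norm_ge_zero h])
qed

lemma bound: "cmod (ph n * integral\<^sup>L M (\<lambda>z. z ^ n * pp N z) - ph n * (z0 ^ n * of_real mu0)) \<le> eps N"
proof -
  have cz: "(\<lambda>z::complex. z ^ n) \<in> borel_measurable borel"
    by (rule borel_measurable_continuous_onI, rule continuous_on_power[OF continuous_on_id])
  have m1: "(\<lambda>z. z ^ n * pp N z) \<in> borel_measurable borel"
    using cz pp_meas[of N] by (rule borel_measurable_times)
  have m2: "(\<lambda>z. z ^ n * ind z) \<in> borel_measurable borel"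
    using cz ind_meas by (rule borel_measurable_times)
  have a1: "AE z in M. cmod (z ^ n * pp N z) \<le> 1"
    using AE_T
  proof eventually_elim
    case (elim z) then show ?case using pp_le[of z N] by (simp add: norm_mult norm_power)
  qed
  have a2: "AE z in M. cmod (z ^ n * ind z) \<le> 1"
    using AE_T
  proof eventually_elim
    case (elim z) then show ?case by (simp add: norm_mult norm_power ind_def indicator_def)
  qed
  have i1: "integrable M (\<lambda>z. z ^ n * pp N z)" by (rule intg[OF m1 a1])
  have i2: "integrable M (\<lambda>z. z ^ n * ind z)" by (rule intg[OF m2 a2])
  have "ph n * integral\<^sup>L M (\<lambda>z. z ^ n * pp N z) - ph n * (z0 ^ n * of_real mu0)
      = ph n * integral\<^sup>L M (\<lambda>z. z ^ n * pp N z - z ^ n * ind z)"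
    by (simp only: Bochner_Integration.integral_diff[OF i1 i2] int_ind right_diff_distrib)
  then have "cmod (ph n * integral\<^sup>L M (\<lambda>z. z ^ n * pp N z) - ph n * (z0 ^ n * of_real mu0))
      = cmod (integral\<^sup>L M (\<lambda>z. z ^ n * pp N z - z ^ n * ind z))"
    by (simp add: norm_mult norm_ph)
  also have "\<dots> \<le> integral\<^sup>L M (\<lambda>z. cmod (z ^ n * pp N z - z ^ n * ind z))"
    by (rule integral_norm_bound)
  also have "\<dots> = eps N" unfolding eps_def
  proof (rule integral_cong_AE)
    show "(\<lambda>z. cmod (z ^ n * pp N z - z ^ n * ind z)) \<in> borel_measurable M"
      unfolding bm_M by (rule measurable_compose[OF borel_measurable_diff[OF m1 m2] borel_measurable_norm])
    show "(\<lambda>z. cmod (pp N z - ind z)) \<in> borel_measurable M"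
      unfolding bm_M by (rule measurable_compose[OF borel_measurable_diff[OF pp_meas ind_meas] borel_measurable_norm])
    show "AE z in M. cmod (z ^ n * pp N z - z ^ n * ind z) = cmod (pp N z - ind z)"
      using AE_T
    proof eventually_elim
      case (elim z) then show ?case by (simp add: right_diff_distrib[symmetric] norm_mult norm_power)
    qed
  qed
  finally show ?thesis .
qed


lemma eps_lim: "eps \<longlonglongrightarrow> 0"
proof -
  interpret prob_space M by (rule prob)
  have "(\<lambda>N. integral\<^sup>L M (\<lambda>z. cmod (pp N z - ind z))) \<longlonglongrightarrow> integral\<^sup>L M (\<lambda>z. 0::real)"
  proof (rule integral_dominated_convergence[where w="\<lambda>z. 2"])
    show "(\<lambda>z. 0::real) \<in> borel_measurable M" by simp
    show "(\<lambda>z. cmod (pp N z - ind z)) \<in> borel_measurable M" for N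
      unfolding bm_M by (rule measurable_compose[OF borel_measurable_diff[OF pp_meas ind_meas] borel_measurable_norm])
    show "integrable M (\<lambda>z. 2::real)" by simp
    show "AE z in M. (\<lambda>N. cmod (pp N z - ind z)) \<longlonglongrightarrow> 0"
      using AE_T
    proof eventually_elim
      case (elim z)
      show ?case
      proof (cases "z = z0")
        case True
        then have "\<And>N. cmod (pp N z - ind z) = 0" by (simp add: pp_z0 ind_def)
        then show ?thesis by simp
      next
        case False
        have h: "cmod ((1 + z * cnj z0) / 2) < 1" by (rule norm_half_lt[OF elim False])
        have "(\<lambda>N. cmod ((1 + z * cnj z0) / 2) ^ N) \<longlonglongrightarrow> 0"
          by (rule LIMSEQ_power_zero) (use h in simp)
        moreover have "\<And>N. cmod (pp N z - ind z) = cmod ((1 + z * cnj z0) / 2) ^ N"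
          using False by (simp add: pp_def ind_def norm_power)
        ultimately show ?thesis by simp
      qed
    qed
    show "AE z in M. norm (cmod (pp N z - ind z)) \<le> 2" for N
      using AE_T
    proof eventually_elim
      case (elim z)
      have "cmod (pp N z - ind z) \<le> cmod (pp N z) + cmod (ind z)" by (rule norm_triangle_ineq4)
      also have "\<dots> \<le> 1 + 1" using pp_le[OF elim, of N] by (intro add_mono) (auto simp: ind_def indicator_def)
      finally show ?case by simp
    qed
  qed
  then show ?thesis unfolding eps_def by simp
qed

lemma w_lim: "(\<lambda>n. ph n * (z0 ^ n * of_real mu0)) \<longlonglongrightarrow> muinf"
proof (rule tendstoI)
  fix e :: real assume e: "e > 0"
  have "eventually (\<lambda>N. eps N < e/2) sequentially"
    using e by (intro order_tendstoD(2)[OF eps_lim]) simp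
  then obtain N where N: "eps N < e/2" by (auto simp: eventually_sequentially)
  have "eventually (\<lambda>n. dist (ph n * integral\<^sup>L M (\<lambda>z. z ^ n * pp N z)) muinf < e/2) sequentially"
    using e by (intro tendstoD[OF int_pp_lim]) simp
  then show "eventually (\<lambda>n. dist (ph n * (z0 ^ n * of_real mu0)) muinf < e) sequentially"
  proof eventually_elim
    case (elim n)
    have "dist (ph n * (z0 ^ n * of_real mu0)) muinf \<le> dist (ph n * (z0 ^ n * of_real mu0)) (ph n * integral\<^sup>L M (\<lambda>z. z ^ n * pp N z))
        + dist (ph n * integral\<^sup>L M (\<lambda>z. z ^ n * pp N z)) muinf" by (rule dist_triangle)
    also have "dist (ph n * (z0 ^ n * of_real mu0)) (ph n * integral\<^sup>L M (\<lambda>z. z ^ n * pp N z)) \<le> eps N"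
      using bound[of n N] by (simp add: dist_norm norm_minus_commute)
    finally show ?case using elim N by simp
  qed
qed

lemma mu0_pos: "mu0 > 0"
proof -
  have "mu0 \<ge> 0" unfolding mu0_def by simp
  moreover have "mu0 \<noteq> 0"
  proof
    assume "mu0 = 0"
    then have "(\<lambda>n. ph n * (z0 ^ n * of_real mu0)) \<longlonglongrightarrow> 0" by simp
    then have "muinf = 0" using w_lim LIMSEQ_unique by blast
    then show False using muinf_nz by simp
  qed
  ultimately show ?thesis by simp
qed

lemma phz_lim: "(\<lambda>n. ph n * z0 ^ n) \<longlonglongrightarrow> muinf / of_real mu0"
proof -
  have "(\<lambda>n. ph n * (z0 ^ n * of_real mu0) / of_real mu0) \<longlonglongrightarrow> muinf / of_real mu0"
    using mu0_pos by (intro tendsto_divide w_lim tendsto_const) simp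
  moreover have "ph n * (z0 ^ n * of_real mu0) / of_real mu0 = ph n * z0 ^ n" for n
    using mu0_pos by simp
  ultimately show ?thesis by simp
qed

lemma ratio_nz: "muinf / of_real mu0 \<noteq> 0" using muinf_nz mu0_pos by simp

lemma inv_eq: "inverse (z0 ^ n) * a = ph n * a / (ph n * z0 ^ n)"
  using ph_nz[of n] z0_nz by (simp add: field_simps)

lemma mus_lim0: "(\<lambda>n. ph n * mus n) \<longlonglongrightarrow> muinf" using mus_lim[of 0] by simp

lemma inv_mus: "(\<lambda>n. inverse (z0 ^ n) * mus n) \<longlonglongrightarrow> of_real mu0"
proof -
  have "(\<lambda>n. ph n * mus n / (ph n * z0 ^ n)) \<longlonglongrightarrow> muinf / (muinf / of_real mu0)"
    by (rule tendsto_divide[OF mus_lim0 phz_lim ratio_nz])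
  then show ?thesis using muinf_nz by (simp add: inv_eq)
qed

lemma inv_U: "(\<lambda>n. inverse (z0 ^ n) * mat_pow U n j k) \<longlonglongrightarrow> of_real mu0 * X j z0 * cnj (X k z0)"
proof -
  have "(\<lambda>n. ph n * mat_pow U n j k / (ph n * z0 ^ n)) \<longlonglongrightarrow> Uinf j k / (muinf / of_real mu0)"
    by (rule tendsto_divide[OF lim' phz_lim ratio_nz])
  then have "(\<lambda>n. inverse (z0 ^ n) * mat_pow U n j k) \<longlonglongrightarrow> Uinf j k / (muinf / of_real mu0)"
    by (simp only: inv_eq)
  moreover have "Uinf j k / (muinf / of_real mu0) = of_real mu0 * X j z0 * cnj (X k z0)"
    using muinf_nz mu0_pos by (simp add: Uinf_form field_simps)
  ultimately show ?thesis by simp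
qed

end



lemma amgm: fixes A B t :: real assumes t: "t > 0" shows "2*A*B \<le> t*A^2 + B^2/t"
proof -
  have h: "0 \<le> (t*A - B)^2" by simp
  have e: "(t*A - B)^2 = t*A^2*t + B^2 - 2*A*B*t" by (simp add: power2_eq_square algebra_simps)
  have "2*A*B*t \<le> t*A^2*t + B^2" using h e by linarith
  then have "2*A*B \<le> (t*A^2*t + B^2)/t" using t by (simp add: pos_le_divide_eq)
  also have "(t*A^2*t + B^2)/t = t*A^2 + B^2/t" using t by (simp add: add_divide_distrib)
  finally show ?thesis .
qed

lemma half_le: fixes a r :: real shows "2 * a \<le> r \<Longrightarrow> a \<le> r / 2" by simp

context qrwm
begin

definition xx :: "nat \<Rightarrow> complex" where "xx j = X j z0"
definition aam :: "nat \<Rightarrow> nat \<Rightarrow> complex" where "aam m j = inverse (z0 ^ m) * mat_pow U m j 0"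
definition gg :: "nat \<Rightarrow> real" where "gg j = (cmod (xx j))\<^sup>2"

lemma aam_lim: "(\<lambda>m. aam m j) \<longlonglongrightarrow> of_real mu0 * xx j"
  using inv_U[of j 0] X0 unfolding aam_def xx_def by simp

lemma aam_norm: "2*m \<le> N \<Longrightarrow> (\<Sum>j\<le>N. (cmod (aam m j))\<^sup>2) = 1"
proof -
  assume "2*m \<le> N"
  have "cmod (aam m j) = cmod (mat_pow U m j 0)" for j
    unfolding aam_def using norm_z0 by (simp add: norm_mult norm_inverse norm_power)
  then show ?thesis using col_norm[OF \<open>2*m \<le> N\<close>] by simp
qed

lemma lx: "leig z0 (\<lambda>k. cnj (xx k))"
  unfolding xx_def by (rule reig_cnj_leig[OF norm_z0 reigX[OF z0_nz]])

lemma aam_one: "2*m \<le> N \<Longrightarrow> (\<Sum>j\<le>N. cnj (xx j) * aam m j) = 1"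
proof -
  assume a: "2*m \<le> N"
  have "(\<Sum>j\<le>N. cnj (xx j) * mat_pow U m j 0) = z0 ^ m * cnj (xx 0)"
    by (rule leig_pow[OF lx]) (use a in simp)
  then have "(\<Sum>j\<le>N. cnj (xx j) * mat_pow U m j 0) = z0 ^ m" using X0 by (simp add: xx_def)
  then have "inverse (z0 ^ m) * (\<Sum>j\<le>N. cnj (xx j) * mat_pow U m j 0) = 1" using z0_nz by simp
  then show ?thesis unfolding aam_def by (simp add: sum_distrib_left algebra_simps)
qed

lemma gg_partial: "(\<Sum>j\<le>K. gg j) \<le> 1 / mu0\<^sup>2"
proof -
  have lim: "(\<lambda>m. \<Sum>j\<le>K. (cmod (aam m j))\<^sup>2) \<longlonglongrightarrow> (\<Sum>j\<le>K. (cmod (of_real mu0 * xx j))\<^sup>2)"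
    by (intro tendsto_intros aam_lim)
  have "\<exists>N. \<forall>m\<ge>N. (\<Sum>j\<le>K. (cmod (aam m j))\<^sup>2) \<le> 1"
  proof (intro exI allI impI)
    fix m assume "K \<le> m"
    have "(\<Sum>j\<le>K. (cmod (aam m j))\<^sup>2) \<le> (\<Sum>j\<le>2*m. (cmod (aam m j))\<^sup>2)"
      by (rule sum_mono2) (use \<open>K \<le> m\<close> in auto)
    also have "\<dots> = 1" by (rule aam_norm) simp
    finally show "(\<Sum>j\<le>K. (cmod (aam m j))\<^sup>2) \<le> 1" .
  qed
  then have "(\<Sum>j\<le>K. (cmod (of_real mu0 * xx j))\<^sup>2) \<le> 1" by (rule LIMSEQ_le_const2[OF lim])
  then have "mu0\<^sup>2 * (\<Sum>j\<le>K. gg j) \<le> 1"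
    using mu0_pos by (simp add: gg_def norm_mult power_mult_distrib sum_distrib_left)
  then show ?thesis using mu0_pos by (simp add: field_simps)
qed

lemma gg_nonneg: "gg j \<ge> 0" unfolding gg_def by simp

lemma gg_summable: "summable gg"
proof (rule summableI_nonneg_bounded[where x="1 / mu0\<^sup>2"])
  fix n show "gg n \<ge> 0" by (rule gg_nonneg)
  show "sum gg {..<n} \<le> 1 / mu0\<^sup>2"
  proof -
    have "sum gg {..<n} \<le> sum gg {..n}" by (rule sum_mono2) (auto simp: gg_nonneg)
    also have "\<dots> \<le> 1 / mu0\<^sup>2" by (rule gg_partial)
    finally show ?thesis .
  qed
qed

definition SS where "SS = suminf gg"

lemma gg_le_S: "(\<Sum>j\<le>K. gg j) \<le> SS"
  unfolding SS_def by (rule sum_le_suminf[OF gg_summable]) (auto simp: gg_nonneg)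

lemma key_bound: assumes t: "t > 0"
  shows "cmod (1 - of_real (mu0 * (\<Sum>j\<le>K. gg j))) \<le> (t + (SS - (\<Sum>j\<le>K. gg j)) / t) / 2"
proof -
  define P where "P = (\<Sum>j\<le>K. gg j)"
  define F where "F m = (\<Sum>j\<le>K. cnj (xx j) * aam m j)" for m
  have Flim: "F \<longlonglongrightarrow> (\<Sum>j\<le>K. cnj (xx j) * (of_real mu0 * xx j))"
    unfolding F_def by (intro tendsto_intros aam_lim)
  have "(\<Sum>j\<le>K. cnj (xx j) * (of_real mu0 * xx j)) = of_real (mu0 * P)"
  proof -
    have "cnj (xx j) * (of_real mu0 * xx j) = of_real (mu0 * gg j)" for j
      unfolding gg_def of_real_mult complex_norm_square by (simp only: ac_simps)
    then have "(\<Sum>j\<le>K. cnj (xx j) * (of_real mu0 * xx j)) = (\<Sum>j\<le>K. of_real (mu0 * gg j))"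
      by (intro sum.cong) simp_all
    also have "\<dots> = of_real (mu0 * P)" unfolding P_def by (simp only: sum_distrib_left of_real_sum)
    finally show ?thesis .
  qed
  with Flim have Flim': "F \<longlonglongrightarrow> of_real (mu0 * P)" by simp
  have "(\<lambda>m. cmod (1 - F m)) \<longlonglongrightarrow> cmod (1 - of_real (mu0 * P))"
    by (intro tendsto_intros Flim')
  moreover have "\<exists>N. \<forall>m\<ge>N. cmod (1 - F m) \<le> (t + (SS - P) / t) / 2"
  proof (intro exI allI impI)
    fix m assume Km: "K \<le> m"
    define D where "D = {..2*m} - {..K}"
    have sub: "{..K} \<subseteq> {..2*m}" using Km by auto
    have split: "(\<Sum>j\<le>2*m. f j) = (\<Sum>j\<in>D. f j) + (\<Sum>j\<le>K. f j)" for f :: "nat \<Rightarrow> 'b::comm_monoid_add"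
      unfolding D_def by (rule sum.subset_diff[OF sub]) simp
    have "(\<Sum>j\<in>D. cnj (xx j) * aam m j) + F m = (\<Sum>j\<le>2*m. cnj (xx j) * aam m j)"
      unfolding F_def by (rule split[symmetric])
    also have "\<dots> = 1" by (rule aam_one) simp
    finally have "1 - F m = (\<Sum>j\<in>D. cnj (xx j) * aam m j)" by (metis add_diff_cancel_right')
    then have "cmod (1 - F m) \<le> (\<Sum>j\<in>D. cmod (xx j) * cmod (aam m j))"
      by (metis (no_types, lifting) norm_sum complex_mod_cnj norm_mult sum.cong)
    also have "\<dots> \<le> (\<Sum>j\<in>D. (t * (cmod (aam m j))\<^sup>2 + (cmod (xx j))\<^sup>2 / t) / 2)"
    proof (rule sum_mono)
      fix j
      have h: "2 * cmod (aam m j) * cmod (xx j) \<le> t * (cmod (aam m j))\<^sup>2 + (cmod (xx j))\<^sup>2 / t" by (rule amgm[OF t])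
      then have h: "2 * (cmod (aam m j) * cmod (xx j)) \<le> t * (cmod (aam m j))\<^sup>2 + (cmod (xx j))\<^sup>2 / t" by (simp only: mult.assoc)
      have "cmod (aam m j) * cmod (xx j) \<le> (t * (cmod (aam m j))\<^sup>2 + (cmod (xx j))\<^sup>2 / t) / 2"
        using h by (rule half_le)
      then show "cmod (xx j) * cmod (aam m j) \<le> (t * (cmod (aam m j))\<^sup>2 + (cmod (xx j))\<^sup>2 / t) / 2"
        by (simp only: mult.commute)
    qed
    also have "\<dots> = (t * (\<Sum>j\<in>D. (cmod (aam m j))\<^sup>2) + (\<Sum>j\<in>D. gg j) / t) / 2"
      by (simp only: sum_divide_distrib[symmetric] sum.distrib sum_distrib_left[symmetric] gg_def)
    also have "(\<Sum>j\<in>D. (cmod (aam m j))\<^sup>2) \<le> 1"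
    proof -
      have "(\<Sum>j\<le>2*m. (cmod (aam m j))\<^sup>2) = 1" by (rule aam_norm) simp
      then show ?thesis using split[of "\<lambda>j. (cmod (aam m j))\<^sup>2"] sum_nonneg[of "{..K}" "\<lambda>j. (cmod (aam m j))\<^sup>2"] by simp
    qed
    also have "(\<Sum>j\<in>D. gg j) \<le> SS - P"
      using split[of gg] gg_le_S[of "2*m"] unfolding P_def by simp
    finally show "cmod (1 - F m) \<le> (t + (SS - P) / t) / 2" using t by (simp add: divide_right_mono)
  qed
  ultimately show ?thesis unfolding P_def[symmetric] by (rule LIMSEQ_le_const2)
qed


lemma SS_eq: "mu0 * SS = 1"
proof -
  have le: "cmod (1 - of_real (mu0 * SS)) \<le> t / 2" if t: "t > 0" for t
  proof -
    have PS: "(\<lambda>K. \<Sum>j\<le>K. gg j) \<longlonglongrightarrow> SS" unfolding SS_def by (rule summable_LIMSEQ'[OF gg_summable])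
    have A: "(\<lambda>K. cmod (1 - of_real (mu0 * (\<Sum>j\<le>K. gg j)))) \<longlonglongrightarrow> cmod (1 - of_real (mu0 * SS))"
      by (intro tendsto_intros PS)
    have B: "(\<lambda>K. (t + (SS - (\<Sum>j\<le>K. gg j)) / t) / 2) \<longlonglongrightarrow> (t + (SS - SS) / t) / 2"
      by (intro tendsto_intros PS) (use t in simp_all)
    have "cmod (1 - of_real (mu0 * SS)) \<le> (t + (SS - SS) / t) / 2"
      by (rule tendsto_le[OF trivial_limit_sequentially B A]) (rule always_eventually, rule allI, rule key_bound[OF t])
    then show ?thesis by simp
  qed
  have "cmod (1 - of_real (mu0 * SS)) = 0"
  proof (rule ccontr)
    assume "cmod (1 - of_real (mu0 * SS)) \<noteq> 0"
    then have p: "cmod (1 - of_real (mu0 * SS)) > 0" by simp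
    from le[OF p] p show False by simp
  qed
  then have "(of_real (mu0 * SS) :: complex) = 1" by simp
  then show ?thesis by (metis of_real_eq_1_iff)
qed

lemma gg_sums: "gg sums (1 / mu0)"
proof -
  have "gg sums SS" unfolding SS_def by (rule summable_sums[OF gg_summable])
  moreover have "SS = 1 / mu0" using SS_eq mu0_pos by (simp add: field_simps)
  ultimately show ?thesis by simp
qed

lemma xx_eig: "(\<Sum>l\<le>j+2. U j l * xx l) = z0 * xx j"
  using reigX[OF z0_nz] unfolding reig_iff xx_def by simp

lemma l2_pair_summable: assumes "in_l2 v" shows "(\<lambda>k. cnj (xx k) * v k) summable_on UNIV"
proof (rule norm_summable_imp_summable_on)
  have s: "summable (\<lambda>k. (gg k + (cmod (v k))\<^sup>2) / 2)"
    using gg_summable assms unfolding in_l2_def by (auto intro!: summable_divide summable_add)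
  show "summable (\<lambda>k. cmod (cnj (xx k) * v k))"
  proof (rule summable_comparison_test'[OF s])
    fix k
    have "2 * cmod (xx k) * cmod (v k) \<le> 1 * (cmod (xx k))\<^sup>2 + (cmod (v k))\<^sup>2 / 1" by (rule amgm) simp
    then have "2 * (cmod (xx k) * cmod (v k)) \<le> gg k + (cmod (v k))\<^sup>2" unfolding gg_def by (simp only: mult.assoc)
    then have "cmod (xx k) * cmod (v k) \<le> (gg k + (cmod (v k))\<^sup>2) / 2" by (rule half_le)
    then show "norm (cmod (cnj (xx k) * v k)) \<le> (gg k + (cmod (v k))\<^sup>2) / 2" by (simp add: norm_mult)
  qed
qed

lemma eig_l2: "in_l2 (\<lambda>j. a * xx j)"
  unfolding in_l2_def using summable_mult[OF gg_summable, of "(cmod a)\<^sup>2"]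
  by (simp add: gg_def norm_mult power_mult_distrib)

lemma eig_apply: "mat_apply U (\<lambda>j. a * xx j) = (\<lambda>j. z0 * (a * xx j))"
proof
  fix j
  have "mat_apply U (\<lambda>j. a * xx j) j = (\<Sum>l\<le>j+2. U j l * (a * xx l))"
    unfolding mat_apply_def by (rule infsum_row)
  also have "\<dots> = a * (\<Sum>l\<le>j+2. U j l * xx l)" by (simp add: sum_distrib_left algebra_simps)
  also have "\<dots> = z0 * (a * xx j)" unfolding xx_eig by (simp only: mult.left_commute)
  finally show "mat_apply U (\<lambda>j. a * xx j) j = z0 * (a * xx j)" .
qed

lemma eigspace_form: assumes "w \<in> eigenspace_l2 U z0" shows "w j = w 0 * xx j"
proof -
  have "mat_apply U w = (\<lambda>j. z0 * w j)" using assms unfolding eigenspace_l2_def by simp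
  then have "\<forall>j. (\<Sum>l\<le>j+2. U j l * w l) = z0 * w j"
    unfolding mat_apply_def by (simp add: infsum_row fun_eq_iff)
  then have r: "reig z0 w" unfolding reig_iff .
  have rx: "reig z0 xx" unfolding xx_def by (rule reigX[OF z0_nz])
  show ?thesis by (rule reig_unique[OF z0_nz r rx]) (simp add: xx_def X0)
qed

definition PP :: cmat where "PP j k = of_real mu0 * xx j * cnj (xx k)"

lemma proj: "is_orth_proj_onto PP (eigenspace_l2 U z0)"
  unfolding is_orth_proj_onto_def
proof (intro allI impI conjI ballI)
  fix v assume v: "in_l2 v"
  define cv where "cv = infsum (\<lambda>k. cnj (xx k) * v k) UNIV"
  have Pv: "mat_apply PP v = (\<lambda>j. (of_real mu0 * cv) * xx j)"
  proof
    fix j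
    have "mat_apply PP v j = infsum (\<lambda>k. (of_real mu0 * xx j) * (cnj (xx k) * v k)) UNIV"
      unfolding mat_apply_def PP_def by (simp add: mult.assoc)
    also have "\<dots> = (of_real mu0 * xx j) * cv" unfolding cv_def by (rule infsum_cmult_right')
    finally show "mat_apply PP v j = (of_real mu0 * cv) * xx j" by (simp add: ac_simps)
  qed
  show "mat_apply PP v \<in> eigenspace_l2 U z0"
    unfolding Pv eigenspace_l2_def using eig_l2 eig_apply by simp
  fix w assume w: "w \<in> eigenspace_l2 U z0"
  have hs1: "((\<lambda>k. cnj (xx k) * v k) has_sum cv) UNIV"
    unfolding cv_def by (rule has_sum_infsum[OF l2_pair_summable[OF v]])
  have "(gg has_sum SS) UNIV"
    unfolding SS_def by (rule sums_nonneg_imp_has_sum[OF summable_sums[OF gg_summable] gg_nonneg])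
  then have hs2: "((\<lambda>j. of_real (gg j) :: complex) has_sum of_real SS) UNIV"
    by (simp only: has_sum_of_real_iff)
  have hs: "((\<lambda>j. cnj (w 0) * (cnj (xx j) * v j) + (- cnj (w 0) * of_real mu0 * cv) * of_real (gg j))
       has_sum (cnj (w 0) * cv + (- cnj (w 0) * of_real mu0 * cv) * of_real SS)) UNIV"
    by (intro has_sum_add has_sum_cmult_right hs1 hs2)
  have feq: "(v j - mat_apply PP v j) * cnj (w j) = cnj (w 0) * (cnj (xx j) * v j) + (- cnj (w 0) * of_real mu0 * cv) * of_real (gg j)" for j
  proof -
    have g: "(of_real (gg j) :: complex) = xx j * cnj (xx j)" unfolding gg_def by (rule complex_norm_square)
    show ?thesis unfolding Pv eigspace_form[OF w, of j] g by (simp add: algebra_simps)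
  qed
  have "cnj (w 0) * cv + (- cnj (w 0) * of_real mu0 * cv) * of_real SS = cnj (w 0) * cv * (1 - of_real (mu0 * SS))"
    by (simp add: algebra_simps)
  also have "\<dots> = 0" using SS_eq by simp
  finally have "((\<lambda>j. (v j - mat_apply PP v j) * cnj (w j)) has_sum 0) UNIV"
    using hs by (simp only: feq)
  then show "(\<Sum>\<^sub>\<infinity>j. (v j - mat_apply PP v j) * cnj (w j)) = 0" by (rule infsumI)
qed

end


theorem proposition2:
  fixes c :: "nat \<Rightarrow> nat \<Rightarrow> nat \<Rightarrow> complex"
    and M :: "complex measure"
    and X :: "nat \<Rightarrow> complex \<Rightarrow> complex"
    and \<theta> :: "nat \<Rightarrow> real"
    and Uinf :: cmat
  assumes coins: "\<And>i. unitary_coin (c i)"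
    and nontriv: "\<And>i. c i 1 1 \<noteq> 0"
    and prob: "prob_space M"
    and sets_M: "sets M = sets borel"
    and on_T: "emeasure M (sphere 0 1) = 1"
    and moments: "\<And>n::int. integral\<^sup>L M (\<lambda>z. z powi n) = mat_ipow (qrw_U c) n 0 0"
    and X0: "\<And>z. X 0 z = 1"
    and Xeig: "\<And>j z. z \<noteq> 0 \<Longrightarrow> (\<Sum>\<^sub>\<infinity>l. qrw_U c j l * X l z) = z * X j z"
    and lim: "\<And>j k. (\<lambda>n. exp (- \<i> * of_real (\<theta> n)) * mat_pow (qrw_U c) n j k) \<longlonglongrightarrow> Uinf j k"
    and nonnull: "Uinf \<noteq> (\<lambda>j k. 0)"
  shows "\<exists>z0. cmod z0 = 1 \<and> measure M {z0} > 0
          \<and> (\<lambda>n. exp (\<i> * of_real (\<theta> (Suc n) - \<theta> n))) \<longlonglongrightarrow> z0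
          \<and> (\<exists>\<mu>inf.
               (\<lambda>n. exp (- \<i> * of_real (\<theta> n)) * integral\<^sup>L M (\<lambda>z. z ^ n)) \<longlonglongrightarrow> \<mu>inf
             \<and> (\<forall>j k. Uinf j k = \<mu>inf * X j z0 * cnj (X k z0))
             \<and> (\<lambda>n. exp (- \<i> * of_real (\<theta> n)) * z0 ^ n) \<longlonglongrightarrow> \<mu>inf / complex_of_real (measure M {z0}))
          \<and> (\<lambda>n. inverse (z0 ^ n) * integral\<^sup>L M (\<lambda>z. z ^ n)) \<longlonglongrightarrow> complex_of_real (measure M {z0})
          \<and> (\<forall>j k. (\<lambda>n. inverse (z0 ^ n) * mat_pow (qrw_U c) n j k)
                  \<longlonglongrightarrow> complex_of_real (measure M {z0}) * X j z0 * cnj (X k z0))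
          \<and> (\<lambda>j. (cmod (X j z0))\<^sup>2) sums (1 / measure M {z0})
          \<and> is_orth_proj_onto (\<lambda>j k. complex_of_real (measure M {z0}) * X j z0 * cnj (X k z0))
               (eigenspace_l2 (qrw_U c) z0)"
proof -
  interpret qrwm c M X \<theta> Uinf
    by (intro qrwm.intro qrw.intro qrwm_axioms.intro) (fact coins nontriv prob sets_M on_T moments X0 Xeig lim nonnull)+
  show ?thesis
  proof (rule exI[where x=z0], intro conjI)
    show "cmod z0 = 1" by (rule norm_z0)
    show "measure M {z0} > 0" using mu0_pos unfolding mu0_def .
    show "(\<lambda>n. exp (\<i> * of_real (\<theta> (Suc n) - \<theta> n))) \<longlonglongrightarrow> z0"
      using bb_lim unfolding bb_def[abs_def] .
    show "\<exists>\<mu>inf. (\<lambda>n. exp (- \<i> * of_real (\<theta> n)) * integral\<^sup>L M (\<lambda>z. z ^ n)) \<longlonglongrightarrow> \<mu>inf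
             \<and> (\<forall>j k. Uinf j k = \<mu>inf * X j z0 * cnj (X k z0))
             \<and> (\<lambda>n. exp (- \<i> * of_real (\<theta> n)) * z0 ^ n) \<longlonglongrightarrow> \<mu>inf / complex_of_real (measure M {z0})"
    proof (rule exI[where x=muinf], intro conjI allI)
      show "(\<lambda>n. exp (- \<i> * of_real (\<theta> n)) * integral\<^sup>L M (\<lambda>z. z ^ n)) \<longlonglongrightarrow> muinf"
        using mus_lim0 unfolding ph_def mus_def .
      show "Uinf j k = muinf * X j z0 * cnj (X k z0)" for j k by (rule Uinf_form)
      show "(\<lambda>n. exp (- \<i> * of_real (\<theta> n)) * z0 ^ n) \<longlonglongrightarrow> muinf / complex_of_real (measure M {z0})"
        using phz_lim unfolding ph_def mu0_def .
    qed
    show "(\<lambda>n. inverse (z0 ^ n) * integral\<^sup>L M (\<lambda>z. z ^ n)) \<longlonglongrightarrow> complex_of_real (measure M {z0})"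
      using inv_mus unfolding mus_def mu0_def .
    show "\<forall>j k. (\<lambda>n. inverse (z0 ^ n) * mat_pow (qrw_U c) n j k)
                  \<longlonglongrightarrow> complex_of_real (measure M {z0}) * X j z0 * cnj (X k z0)"
      using inv_U unfolding mu0_def by blast
    show "(\<lambda>j. (cmod (X j z0))\<^sup>2) sums (1 / measure M {z0})"
      using gg_sums unfolding gg_def[abs_def] xx_def mu0_def .
    show "is_orth_proj_onto (\<lambda>j k. complex_of_real (measure M {z0}) * X j z0 * cnj (X k z0))
               (eigenspace_l2 (qrw_U c) z0)"
      using proj unfolding PP_def[abs_def] xx_def mu0_def .
  qed
qed

end
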